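(* Let $q$ be a prime power, let $h(x)\in\mathbb{F}_{q^6}[x]$, let $L(x)=\sum_i a_i x^{q^i}$ be a $q$-polynomial with all $a_i\in\mathbb{F}_q$, and let $\delta\in\mathbb{F}_{q^6}$. Write $w(x)=x^{q^2}+x^q+x+\delta$. Then the polynomial $$f(x)=h(w(x))^{q^4}-h(w(x))^{q^3}+h(w(x))^{q}-h(w(x))+L(x)$$ permutes $\mathbb{F}_{q^6}$ if and only if $L(x)$ permutes $\mathbb{F}_{q^6}$.
   Context: A polynomial permutes $\mathbb{F}_{q^6}$ if it induces a bijection of $\mathbb{F}_{q^6}$. *)

theory Defs
  imports "HOL-Computational_Algebra.Polynomial" "HOL-Computational_Algebra.Primes"
begin

definition qpoly :: "nat \<Rightarrow> nat \<Rightarrow> (nat \<Rightarrow> 'a::field) \<Rightarrow> 'a \<Rightarrow> 'a" where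
  "qpoly q n a x = (\<Sum>i<n. a i * x ^ (q ^ i))"

definition permutes_field :: "('a \<Rightarrow> 'a) \<Rightarrow> bool" where
  "permutes_field f \<longleftrightarrow> bij f"

end

theory Submission
  imports Defs "HOL-Number_Theory.Residues"
begin

lemma fin_field_pow_card:
  fixes x :: "'a::{finite,field}"
  shows "x ^ card (UNIV :: 'a set) = x"
proof (cases "x = 0")
  case False
  have "x * (\<Prod>y\<in>UNIV-{0}. x * y) = x * x ^ (card (UNIV :: 'a set) - 1) * \<Prod>(UNIV-{0})"
    by (simp add: prod.distrib mult_ac)
  also have "x * x ^ (card (UNIV :: 'a set) - 1) = x ^ Suc (card (UNIV :: 'a set) - 1)"
    by (subst power_Suc) auto
  also have "Suc (card (UNIV :: 'a set) - 1) = card (UNIV :: 'a set)"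
    using finite_UNIV_card_ge_0[where ?'a = 'a] by simp
  also have "(\<Prod>y\<in>UNIV-{0}. x * y) = (\<Prod>y\<in>UNIV-{0}. y)"
    by (rule prod.reindex_bij_witness[of _ "\<lambda>y. y / x" "\<lambda>y. x * y"]) (use False in auto)
  finally show ?thesis
    by simp
qed (use finite_UNIV_card_ge_0[where ?'a = 'a] in auto)

lemma core:
  fixes q n :: nat
    and h :: "'a::{finite,field} poly"
    and a :: "nat \<Rightarrow> 'a"
    and \<delta> :: 'a
  assumes sadd: "\<And>x y::'a. (x + y) ^ q = x ^ q + y ^ q"
    and fix6: "\<And>x::'a. x ^ (q^6) = x"
    and q0: "q > 0"
    and acoef: "\<forall>i<n. a i ^ q = a i"
  shows "permutes_field
           (\<lambda>x. let w = x ^ (q^2) + x ^ q + x + \<delta>; y = poly h w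
                in y ^ (q^4) - y ^ (q^3) + y ^ q - y + qpoly q n a x)
         \<longleftrightarrow> permutes_field (qpoly q n a)"
proof -
  have pw: "\<And>x::'a. \<And>j. x ^ (q ^ Suc j) = (x ^ (q ^ j)) ^ q"
    by (metis power_Suc2 power_mult)
  have pw2: "\<And>x::'a. \<And>j. x ^ (q * q ^ j) = (x ^ (q ^ j)) ^ q"
    using pw by simp
  have smin: "\<And>x y::'a. (x - y) ^ q = x ^ q - y ^ q"
    using sadd by (metis add_diff_cancel_right' diff_add_cancel)
  have s0: "(0::'a) ^ q = 0" using q0 by simp
  have ssum: "\<And>f::nat \<Rightarrow> 'a. \<And>A. (sum f A) ^ q = (\<Sum>i\<in>A. f i ^ q)"
  proof -
    fix f :: "nat \<Rightarrow> 'a" and A :: "nat set"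
    show "(sum f A) ^ q = (\<Sum>i\<in>A. f i ^ q)"
      by (induction A rule: infinite_finite_induct) (auto simp: s0 sadd)
  qed
  define L where "L = qpoly q n a"
  define \<psi> where "\<psi> = (\<lambda>x::'a. x ^ (q^2) + x ^ q + x)"
  define T where "T = (\<lambda>y::'a. y ^ (q^4) - y ^ (q^3) + y ^ q - y)"
  define f where "f = (\<lambda>x. let w = x ^ (q^2) + x ^ q + x + \<delta>; y = poly h w
                in y ^ (q^4) - y ^ (q^3) + y ^ q - y + qpoly q n a x)"
  have f_eq: "\<And>x. f x = T (poly h (\<psi> x + \<delta>)) + L x"
    by (simp add: f_def T_def \<psi>_def L_def Let_def)
  have q2: "\<And>x::'a. x ^ (q^2) = (x^q)^q" by (simp add: power2_eq_square power_mult)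
  have \<psi>2: "\<psi> = (\<lambda>x. (x^q)^q + x ^ q + x)" using q2 by (simp add: \<psi>_def)
  have Ladd: "\<And>x y. L (x + y) = L x + L y"
  proof -
    fix x y :: 'a
    have "\<And>i. (x+y)^(q^i) = x^(q^i) + y^(q^i)"
    proof -
      fix i show "(x+y)^(q^i) = x^(q^i) + y^(q^i)"
        by (induction i) (simp_all add: pw2 sadd)
    qed
    thus "L (x + y) = L x + L y"
      by (simp add: L_def qpoly_def distrib_left sum.distrib)
  qed
  have L0: "L 0 = 0" using q0 by (simp add: L_def qpoly_def zero_power)
  have Lmin: "\<And>x y. L (x - y) = L x - L y"
    using Ladd by (metis add_diff_cancel_right' diff_add_cancel)
  have Ls: "\<And>x. L (x ^ q) = (L x) ^ q"
  proof -
    fix x :: 'a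
    have "(L x) ^ q = (\<Sum>i<n. (a i * x ^ (q ^ i)) ^ q)"
      by (simp add: L_def qpoly_def ssum)
    also have "\<dots> = (\<Sum>i<n. a i * (x^q) ^ (q ^ i))"
    proof (rule sum.cong)
      fix i assume "i \<in> {..<n}"
      hence "a i ^ q = a i" using acoef by auto
      moreover have "(x ^ (q ^ i)) ^ q = (x^q) ^ (q^i)"
        by (simp flip: power_mult add: mult.commute)
      ultimately show "(a i * x ^ (q ^ i)) ^ q = a i * (x^q) ^ (q ^ i)"
        by (simp add: power_mult_distrib)
    qed simp
    finally show "L (x ^ q) = (L x) ^ q" by (simp add: L_def qpoly_def)
  qed
  have L\<psi>: "\<And>x. L (\<psi> x) = \<psi> (L x)"
    by (simp add: \<psi>2 Ladd Ls)
  have \<psi>add: "\<And>x y. \<psi> (x + y) = \<psi> x + \<psi> y"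
    by (simp add: \<psi>2 sadd)
  have \<psi>T: "\<And>y. \<psi> (T y) = 0"
  proof -
    fix y :: 'a
    have e6: "((((((y^q)^q)^q)^q)^q)^q) = y" using fix6[of y] by (simp add: numeral_eq_Suc power_mult)
    have e1: "\<And>j (z::'a). z^(q^Suc j) = (z^(q^j))^q" using pw by blast
    have e3: "y^(q^3) = ((y^q)^q)^q"
      by (simp only: power3_eq_cube power_mult)
    have e4: "y^(q^4) = (((y^q)^q)^q)^q"
      by (simp only: power4_eq_xxxx power_mult)
    have "T y = (((y^q)^q)^q)^q - ((y^q)^q)^q + y^q - y" by (simp only: T_def e4 e3)
    have grp: "\<And>a b c d e s::'a. s - e + c - b + (e - d + b - a) + (d - c + a - s) = 0"
      by (simp add: algebra_simps)
    show "\<psi> (T y) = 0"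
      unfolding \<open>T y = _\<close> by (simp only: \<psi>2 sadd smin e6) (rule grp)
  qed
  have \<psi>f: "\<And>x. \<psi> (f x) = L (\<psi> x)"
    by (simp add: f_eq \<psi>add \<psi>T L\<psi>)
  have bij_inj: "\<And>g::'a \<Rightarrow> 'a. bij g \<longleftrightarrow> inj g"
    by (auto simp: bij_def finite_UNIV_inj_surj)
  have "inj f \<longleftrightarrow> inj L"
  proof
    assume fi: "inj f"
    have Lsurj: "L ` (\<psi> ` UNIV) = \<psi> ` UNIV"
    proof -
      have "L ` (\<psi> ` UNIV) = (\<lambda>x. L (\<psi> x)) ` UNIV" by (simp add: image_image)
      also have "\<dots> = (\<lambda>x. \<psi> (f x)) ` UNIV" by (simp only: \<psi>f)
      also have "\<dots> = \<psi> ` (f ` UNIV)" by (simp add: image_image)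
      also have "f ` UNIV = UNIV" using fi finite_UNIV_inj_surj[of f] by simp
      finally show ?thesis .
    qed
    have Linj: "inj_on L (\<psi> ` UNIV)"
      by (rule eq_card_imp_inj_on) (simp_all add: Lsurj)
    have kz: "z = 0" if "L z = 0" for z
    proof (cases "\<psi> z = 0")
      case True
      have "f (1 + z) = f 1" using True that by (simp only: f_eq \<psi>add Ladd) simp
      hence "1 + z = 1" using fi by (simp add: inj_eq)
      thus ?thesis by simp
    next
      case False
      have "\<psi> 0 = 0" using q0 by (simp add: \<psi>_def zero_power)
      have "L (\<psi> z) = L (\<psi> 0)" using that L\<psi> L0 \<open>\<psi> 0 = 0\<close> by simp
      hence "\<psi> z = \<psi> 0" using Linj by (auto simp: inj_on_def)
      thus ?thesis using False \<open>\<psi> 0 = 0\<close> by simp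
    qed
    show "inj L"
    proof (rule injI)
      fix x y assume "L x = L y"
      hence "L (x - y) = 0" by (simp add: Lmin)
      thus "x = y" using kz by fastforce
    qed
  next
    assume Li: "inj L"
    show "inj f"
    proof (rule injI)
      fix x y assume e: "f x = f y"
      hence "L (\<psi> x) = L (\<psi> y)" using \<psi>f by metis
      hence "\<psi> x = \<psi> y" using Li by (simp add: inj_eq)
      hence "L x = L y" using e by (simp add: f_eq)
      thus "x = y" using Li by (simp add: inj_eq)
    qed
  qed
  hence "permutes_field f \<longleftrightarrow> permutes_field L"
    using bij_inj by (simp add: permutes_field_def)
  thus ?thesis by (simp only: f_def L_def)
qed

theorem mainTheorem10:
  fixes q p k n :: nat
    and h :: "'a::{finite,field} poly"
    and a :: "nat \<Rightarrow> 'a"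
    and \<delta> :: 'a
  assumes "prime p" and "k \<ge> 1" and "q = p ^ k"
    and "card (UNIV :: 'a set) = q ^ 6"
    and "\<forall>i<n. a i ^ q = a i"
  shows "permutes_field
           (\<lambda>x. let w = x ^ (q^2) + x ^ q + x + \<delta>; y = poly h w
                in y ^ (q^4) - y ^ (q^3) + y ^ q - y + qpoly q n a x)
         \<longleftrightarrow> permutes_field (qpoly q n a)"
proof (rule core)
  have cpos: "CHAR('a) > 0" by (rule finite_imp_CHAR_pos) simp
  have cpr: "prime CHAR('a)" using cpos by (rule prime_CHAR_semidom)
  have "CHAR('a) dvd p ^ (k * 6)" using CHAR_dvd_CARD[where 'a='a] assms(3,4)
    by (simp add: power_mult)
  hence "CHAR('a) dvd p" using cpr prime_dvd_power by blast
  hence cp: "CHAR('a) = p" using assms(1) cpr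
    using primes_dvd_imp_eq by blast
  show "\<And>x y::'a. (x + y) ^ q = x ^ q + y ^ q"
    using cpr cp assms(3) by (intro freshmans_dream') auto
  show "\<And>x::'a. x ^ (q^6) = x" using fin_field_pow_card assms(4) by metis
  show "q > 0" using assms(1,3) prime_gt_0_nat by simp
  show "\<forall>i<n. a i ^ q = a i" by fact
qed

end
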